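(* Let $N>0$, $R=\mathbb{Q}[x_1,x_2,y_1,y_2]$, and let $t_i,w_i,s_i,u_i$ and $X_\bullet=\{(u_1,u_2),(s_1,s_2)\}$, $X_\circ=\{(w_1,w_2),(t_1,t_2)\}$ be as in the context. Put $$\gamma=\frac{\partial u_1}{\partial y_1}-\frac{\partial u_1}{\partial y_2}-\frac12\frac{\partial u_2}{\partial y_2}(x_2+y_2)+\frac12\frac{\partial u_2}{\partial y_1}(x_1+y_1).$$ Then the partial differential equation $2z+\frac{\partial z}{\partial y_1}(y_1-x_1)+\frac{\partial z}{\partial y_2}(y_2-x_2)=\gamma$ in an unknown $z$ has a unique polynomial solution $\Omega_2(\gamma)\in R$, and the $R$-linear map $\chi_1:X_\bullet\to X_\circ$ defined by $\chi_1(1)=1+\Omega_2(\gamma)\,\theta_1\theta_2$, $\chi_1(\theta_1)=\theta_1+\theta_2$, $\chi_1(\theta_2)=\frac12(x_2+y_2)\theta_1+\frac12(x_1+y_1)\theta_2$, $\chi_1(\theta_1\theta_2)=\frac12(x_1+y_1-x_2-y_2)\theta_1\theta_2$ is a morphism of graded matrix factorisations such that $\pi_\circ\circ\chi_1$ is homotopic to $\mathrm{can}\circ\pi_\bullet$, where $\mathrm{can}:R/(s_1,s_2)\to R/(t_1,t_2)$ is the canonical surjection.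
   Context: Variables have degree $2$. $t_i=y_i-x_i$, $w_i=(y_i^{N+1}-x_i^{N+1})/(y_i-x_i)$, $s_1=y_1+y_2-x_1-x_2$, $s_2=y_1y_2-x_1x_2$, and $u_1,u_2\in R$ are homogeneous with $W:=y_1^{N+1}+y_2^{N+1}-x_1^{N+1}-x_2^{N+1}=u_1s_1+u_2s_2$ and $u_i(y_1,y_2,x_1,x_2)=u_i(x_1,x_2,y_1,y_2)$. For sequences $\boldsymbol a,\boldsymbol b$ of homogeneous elements with $\deg a_i+\deg b_i=2c$ (here $c=N+1$), the cyclic Koszul matrix factorisation $\{\boldsymbol a,\boldsymbol b\}$ of $\sum a_ib_i$ is the exterior algebra $\bigwedge F$ on $F=R\theta_1\oplus R\theta_2$, with $\theta_i$ of $\mathbb{Z}_2$-degree $1$ and internal degree $\deg a_i-c$, and differential $\delta_++\delta_-$ where $\delta_+=(\sum_ib_i\theta_i^* )\lrcorner(-)$ (contraction) and $\delta_-=(\sum_ia_i\theta_i)\wedge(-)$. $\pi_\bullet:X_\bullet\to R/(s_1,s_2)$ and $\pi_\circ:X_\circ\to R/(t_1,t_2)$ are the morphisms of linear factorisations (modules viewed as factorisations of zero) given by projecting onto $\bigwedge^0F=R$ and then onto the quotient. *)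

theory Defs
  imports Complex_Main "HOL-Library.Poly_Mapping"
begin

datatype var = X1 | X2 | Y1 | Y2

type_synonym mpoly = "(var \<Rightarrow>\<^sub>0 nat) \<Rightarrow>\<^sub>0 rat"

definition Var :: "var \<Rightarrow> mpoly" where
  "Var v = Poly_Mapping.single (Poly_Mapping.single v 1) 1"

definition Const :: "rat \<Rightarrow> mpoly" where
  "Const c = Poly_Mapping.single 0 c"

definition pderiv_var :: "var \<Rightarrow> mpoly \<Rightarrow> mpoly" where
  "pderiv_var v p = (\<Sum>m\<in>Poly_Mapping.keys p.
     Poly_Mapping.single (m - Poly_Mapping.single v (1::nat)) (of_nat (Poly_Mapping.lookup m v) * Poly_Mapping.lookup p m))"

definition msubst :: "(var \<Rightarrow> mpoly) \<Rightarrow> mpoly \<Rightarrow> mpoly" where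
  "msubst \<sigma> p = (\<Sum>m\<in>Poly_Mapping.keys p. Const (Poly_Mapping.lookup p m) * (\<Prod>v\<in>Poly_Mapping.keys m. \<sigma> v ^ Poly_Mapping.lookup m v))"

definition swap_xy :: "var \<Rightarrow> mpoly" where
  "swap_xy v = (case v of X1 \<Rightarrow> Var Y1 | X2 \<Rightarrow> Var Y2 | Y1 \<Rightarrow> Var X1 | Y2 \<Rightarrow> Var X2)"

text \<open>Total degree of a monomial (standard grading; the paper's degree is twice this).\<close>
definition mon_deg :: "(var \<Rightarrow>\<^sub>0 nat) \<Rightarrow> nat" where
  "mon_deg m = (\<Sum>v\<in>Poly_Mapping.keys m. Poly_Mapping.lookup m v)"

definition homogeneous :: "mpoly \<Rightarrow> bool" where
  "homogeneous p \<longleftrightarrow> (\<exists>d. \<forall>m\<in>Poly_Mapping.keys p. mon_deg m = d)"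

definition hom_of_deg :: "int \<Rightarrow> mpoly \<Rightarrow> bool" where
  "hom_of_deg d p \<longleftrightarrow> (\<forall>m\<in>Poly_Mapping.keys p. 2 * int (mon_deg m) = d)"

definition t1 :: mpoly where "t1 = Var Y1 - Var X1"
definition t2 :: mpoly where "t2 = Var Y2 - Var X2"

text \<open>w_i = (y_i^(N+1) - x_i^(N+1)) / (y_i - x_i), written as the exact quotient.\<close>
definition wpoly :: "nat \<Rightarrow> var \<Rightarrow> var \<Rightarrow> mpoly" where
  "wpoly N x y = (\<Sum>k\<le>N. Var y ^ k * Var x ^ (N - k))"

definition w1 :: "nat \<Rightarrow> mpoly" where "w1 N = wpoly N X1 Y1"
definition w2 :: "nat \<Rightarrow> mpoly" where "w2 N = wpoly N X2 Y2"

definition s1 :: mpoly where "s1 = Var Y1 + Var Y2 - Var X1 - Var X2"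
definition s2 :: mpoly where "s2 = Var Y1 * Var Y2 - Var X1 * Var X2"

definition Wpot :: "nat \<Rightarrow> mpoly" where
  "Wpot N = Var Y1 ^ (N+1) + Var Y2 ^ (N+1) - Var X1 ^ (N+1) - Var X2 ^ (N+1)"

definition gamma :: "mpoly \<Rightarrow> mpoly \<Rightarrow> mpoly" where
  "gamma u1 u2 = pderiv_var Y1 u1 - pderiv_var Y2 u1
     - Const (1/2) * pderiv_var Y2 u2 * (Var X2 + Var Y2)
     + Const (1/2) * pderiv_var Y1 u2 * (Var X1 + Var Y1)"

definition pde_sol :: "mpoly \<Rightarrow> mpoly \<Rightarrow> bool" where
  "pde_sol g z \<longleftrightarrow>
     2 * z + pderiv_var Y1 z * (Var Y1 - Var X1) + pderiv_var Y2 z * (Var Y2 - Var X2) = g"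

text \<open>Basis 1, theta1, theta2, theta1 theta2; elements are coefficient functions.\<close>
datatype ebasis = E0 | E1 | E2 | E12

type_synonym ext = "ebasis \<Rightarrow> mpoly"

definition ext_add :: "ext \<Rightarrow> ext \<Rightarrow> ext" where
  "ext_add f g = (\<lambda>e. f e + g e)"

definition ext_smult :: "mpoly \<Rightarrow> ext \<Rightarrow> ext" where
  "ext_smult r f = (\<lambda>e. r * f e)"

definition ext_wedge :: "ext \<Rightarrow> ext \<Rightarrow> ext" where
  "ext_wedge f g = (\<lambda>e. case e of
      E0 \<Rightarrow> f E0 * g E0
    | E1 \<Rightarrow> f E0 * g E1 + f E1 * g E0
    | E2 \<Rightarrow> f E0 * g E2 + f E2 * g E0
    | E12 \<Rightarrow> f E0 * g E12 + f E12 * g E0 + f E1 * g E2 - f E2 * g E1)"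

text \<open>Contraction with the dual basis vectors theta1^*, theta2^* (odd derivations).\<close>
definition contr1 :: "ext \<Rightarrow> ext" where
  "contr1 f = (\<lambda>e. case e of E0 \<Rightarrow> f E1 | E1 \<Rightarrow> 0 | E2 \<Rightarrow> f E12 | E12 \<Rightarrow> 0)"

definition contr2 :: "ext \<Rightarrow> ext" where
  "contr2 f = (\<lambda>e. case e of E0 \<Rightarrow> f E2 | E1 \<Rightarrow> - f E12 | E2 \<Rightarrow> 0 | E12 \<Rightarrow> 0)"

definition theta1 :: ext where "theta1 = (\<lambda>e. if e = E1 then 1 else 0)"
definition theta2 :: ext where "theta2 = (\<lambda>e. if e = E2 then 1 else 0)"

text \<open>Differential of the cyclic Koszul factorisation {(a1,a2),(b1,b2)}:
  delta_plus = (b1 theta1^* + b2 theta2^*) contracted, delta_minus = (a1 theta1 + a2 theta2) wedge.\<close>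
definition koszul_d :: "mpoly \<Rightarrow> mpoly \<Rightarrow> mpoly \<Rightarrow> mpoly \<Rightarrow> ext \<Rightarrow> ext" where
  "koszul_d a1 a2 b1 b2 f =
     ext_add (ext_add (ext_smult b1 (contr1 f)) (ext_smult b2 (contr2 f)))
             (ext_wedge (ext_add (ext_smult a1 theta1) (ext_smult a2 theta2)) f)"

text \<open>Internal degrees of the basis elements: theta_i has degree c - deg a_i.\<close>
definition theta_deg :: "int \<Rightarrow> int \<Rightarrow> int \<Rightarrow> ebasis \<Rightarrow> int" where
  "theta_deg c da1 da2 e = (case e of E0 \<Rightarrow> 0 | E1 \<Rightarrow> c - da1 | E2 \<Rightarrow> c - da2
                              | E12 \<Rightarrow> (c - da1) + (c - da2))"

definition ext_hom_deg :: "(ebasis \<Rightarrow> int) \<Rightarrow> int \<Rightarrow> ext \<Rightarrow> bool" where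
  "ext_hom_deg dg d f \<longleftrightarrow> (\<forall>e. hom_of_deg (d - dg e) (f e))"

definition ext_even :: "ext \<Rightarrow> bool" where
  "ext_even f \<longleftrightarrow> f E1 = 0 \<and> f E2 = 0"

definition ext_odd :: "ext \<Rightarrow> bool" where
  "ext_odd f \<longleftrightarrow> f E0 = 0 \<and> f E12 = 0"

definition lin_ext :: "(ebasis \<Rightarrow> ext) \<Rightarrow> ext \<Rightarrow> ext" where
  "lin_ext img f = (\<lambda>e'. f E0 * img E0 e' + f E1 * img E1 e' + f E2 * img E2 e' + f E12 * img E12 e')"

definition graded_mf_morphism ::
  "(ext \<Rightarrow> ext) \<Rightarrow> (ext \<Rightarrow> ext) \<Rightarrow> (ebasis \<Rightarrow> int) \<Rightarrow> (ext \<Rightarrow> ext) \<Rightarrow> (ebasis \<Rightarrow> int)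
     \<Rightarrow> bool" where
  "graded_mf_morphism phi dX dgX dY dgY \<longleftrightarrow>
     (\<forall>f. dY (phi f) = phi (dX f)) \<and>
     (\<forall>f. ext_even f \<longrightarrow> ext_even (phi f)) \<and>
     (\<forall>f. ext_odd f \<longrightarrow> ext_odd (phi f)) \<and>
     (\<forall>d f. ext_hom_deg dgX d f \<longrightarrow> ext_hom_deg dgY d (phi f))"

definition in_ideal2 :: "mpoly \<Rightarrow> mpoly \<Rightarrow> mpoly \<Rightarrow> bool" where
  "in_ideal2 p q r \<longleftrightarrow> (\<exists>a b. r = a * p + b * q)"

text \<open>Projection onto wedge^0 F = R (followed by the quotient map, which is taken
  into account by comparing representatives modulo the ideal).\<close>
definition proj0 :: "ext \<Rightarrow> mpoly" where
  "proj0 f = f E0"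

text \<open>Two morphisms F, G : X \<rightarrow> R/(p,q) (the module viewed as a factorisation of 0,
  concentrated in even degree, zero differential), given by representative maps into R,
  are homotopic iff F - G = h o dX for an odd R-linear h : X \<rightarrow> R/(p,q); such h
  vanishes on the even part and is given by h(theta_i) = h_i.\<close>
definition homotopic_to_module ::
  "(ext \<Rightarrow> ext) \<Rightarrow> mpoly \<Rightarrow> mpoly \<Rightarrow> (ext \<Rightarrow> mpoly) \<Rightarrow> (ext \<Rightarrow> mpoly) \<Rightarrow> bool" where
  "homotopic_to_module dX p q F G \<longleftrightarrow>
     (\<exists>h1 h2. \<forall>f. in_ideal2 p q (F f - G f - (h1 * dX f E1 + h2 * dX f E2)))"

definition chi1_img :: "mpoly \<Rightarrow> ebasis \<Rightarrow> ext" where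
  "chi1_img Om e = (case e of
      E0 \<Rightarrow> (\<lambda>e'. case e' of E0 \<Rightarrow> 1 | E12 \<Rightarrow> Om | _ \<Rightarrow> 0)
    | E1 \<Rightarrow> (\<lambda>e'. case e' of E1 \<Rightarrow> 1 | E2 \<Rightarrow> 1 | _ \<Rightarrow> 0)
    | E2 \<Rightarrow> (\<lambda>e'. case e' of E1 \<Rightarrow> Const (1/2) * (Var X2 + Var Y2)
                            | E2 \<Rightarrow> Const (1/2) * (Var X1 + Var Y1) | _ \<Rightarrow> 0)
    | E12 \<Rightarrow> (\<lambda>e'. case e' of
               E12 \<Rightarrow> Const (1/2) * (Var X1 + Var Y1 - Var X2 - Var Y2) | _ \<Rightarrow> 0))"

definition chi1 :: "mpoly \<Rightarrow> ext \<Rightarrow> ext" where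
  "chi1 Om = lin_ext (chi1_img Om)"

end

theory Submission
  imports Defs
begin


abbreviation lk where "lk \<equiv> Poly_Mapping.lookup"
abbreviation ks where "ks \<equiv> Poly_Mapping.keys"
abbreviation sg where "sg \<equiv> Poly_Mapping.single"

fun var_idx :: "var \<Rightarrow> nat" where
  "var_idx X1 = 0" | "var_idx X2 = 1" | "var_idx Y1 = 2" | "var_idx Y2 = 3"

lemma var_idx_inj: "var_idx a = var_idx b \<Longrightarrow> a = b"
  by (cases a; cases b; simp)

instantiation var :: linorder begin
definition "less_eq_var a b \<longleftrightarrow> var_idx a \<le> var_idx b"
definition "less_var a b \<longleftrightarrow> var_idx a < var_idx b"
instance by standard (auto simp: less_eq_var_def less_var_def intro: var_idx_inj)
end

type_synonym mono = "var \<Rightarrow>\<^sub>0 nat"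

lemma mono_split: "((n::mono) = sg v 1 + q) \<longleftrightarrow> (lk n v > 0 \<and> q = n - sg v 1)"
  by (auto simp: poly_mapping_eq_iff fun_eq_iff lookup_add lookup_minus lookup_single when_def)

lemma Var_eq: "Var v = sg (sg v 1) 1" by (simp add: Var_def)

lemma lookup_Var_mult: "lk (Var v * p) n = (if lk n v > 0 then lk p (n - sg v 1) else 0)"
proof -
  have "lk (Var v * p) n = Sum_any (\<lambda>q. lk p q when n = sg v 1 + q)"
    unfolding Var_eq lookup_mult lookup_single by (simp add: when_mult)
  also have "\<dots> = Sum_any (\<lambda>q. lk p q when (lk n v > 0 \<and> q = n - sg v 1))"
    unfolding mono_split ..
  also have "\<dots> = (if lk n v > 0 then lk p (n - sg v 1) else 0)"
    by (cases "lk n v > 0") (simp_all add: conj_commute)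
  finally show ?thesis .
qed

lemma lookup_Const_mult: "lk (Const c * p) n = c * lk p n"
  unfolding Const_def lookup_mult lookup_single by (simp add: when_mult mult_when)

lemma lk_add_single: "lk ((n::mono) + sg v 1) w = lk n w + (if v = w then 1 else 0)"
  by (simp add: lookup_add lookup_single)
lemma lk_minus_single: "lk ((n::mono) - sg v 1) w = lk n w - (if v = w then 1 else 0)"
  by (simp add: lookup_minus lookup_single)
lemma add_minus_single[simp]: "(n::mono) + sg v 1 - sg v 1 = n"
  by (simp add: poly_mapping_eq_iff fun_eq_iff lookup_add lookup_minus)
lemma minus_add_single: "lk (n::mono) v > 0 \<Longrightarrow> n - sg v 1 + sg v 1 = n"
  by (auto simp: poly_mapping_eq_iff fun_eq_iff lookup_add lookup_minus lookup_single when_def)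
lemma minus_add_comm: "lk (n::mono) w > 0 \<Longrightarrow> n - sg w 1 + sg v 1 = n + sg v 1 - sg w 1"
  by (auto simp: poly_mapping_eq_iff fun_eq_iff lookup_add lookup_minus lookup_single when_def)

lemma lookup_pderiv: "lk (pderiv_var v p) n = of_nat (lk n v + 1) * lk p (n + sg v 1)"
proof -
  have "lk (pderiv_var v p) n = (\<Sum>m\<in>ks p. (of_nat (lk m v) * lk p m when m - sg v 1 = n))"
    unfolding pderiv_var_def lookup_sum lookup_single by simp
  also have "\<dots> = (\<Sum>m\<in>ks p. (of_nat (lk m v) * lk p m when m = n + sg v 1))"
  proof (rule sum.cong[OF refl])
    fix m show "(of_nat (lk m v) * lk p m when m - sg v 1 = n) = (of_nat (lk m v) * lk p m when m = n + sg v 1)"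
    proof (cases "lk m v > 0")
      case True
      then have "m - sg v 1 = n \<longleftrightarrow> m = n + sg v 1"
        using minus_add_single[OF True] by auto
      then show ?thesis by simp
    next
      case False
      then show ?thesis by (auto simp: when_def lk_add_single)
    qed
  qed
  also have "\<dots> = of_nat (lk n v + 1) * lk p (n + sg v 1)"
    by (cases "n + sg v 1 \<in> ks p") (auto simp: when_def lookup_add lookup_single in_keys_iff)
  finally show ?thesis .
qed

lemma pderiv_add: "pderiv_var v (p + q) = pderiv_var v p + pderiv_var v q"
  by (rule poly_mapping_eqI) (simp add: lookup_pderiv lookup_add algebra_simps)
lemma pderiv_diff: "pderiv_var v (p - q) = pderiv_var v p - pderiv_var v q"
  by (rule poly_mapping_eqI) (simp add: lookup_pderiv lookup_minus algebra_simps)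
lemma pderiv_zero[simp]: "pderiv_var v 0 = 0"
  by (rule poly_mapping_eqI) (simp add: lookup_pderiv)
lemma pderiv_Const_mult: "pderiv_var v (Const c * p) = Const c * pderiv_var v p"
  apply (rule poly_mapping_eqI)
  apply (simp only: lookup_pderiv lookup_Const_mult)
  apply (simp add: ac_simps)
  done

lemma pderiv_Var_mult: "pderiv_var v (Var w * p) = (if v = w then p else 0) + Var w * pderiv_var v p"
proof (rule poly_mapping_eqI)
  fix n
  show "lk (pderiv_var v (Var w * p)) n = lk ((if v = w then p else 0) + Var w * pderiv_var v p) n"
  proof (cases "v = w")
    case True
    have l: "lk (pderiv_var v (Var w * p)) n = of_nat (lk n v + 1) * lk p n"
      unfolding lookup_pderiv lookup_Var_mult using True by (simp add: lookup_add lookup_single)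
    have r: "lk (Var w * pderiv_var v p) n = of_nat (lk n v) * lk p n"
    proof (cases "lk n v > 0")
      case True
      have a: "lk (n - sg v 1) v + 1 = lk n v" using True by (simp add: lookup_minus lookup_single)
      have b: "n - sg v 1 + sg v 1 = n" using True by (rule minus_add_single)
      have c: "w = v" using \<open>v = w\<close> by simp
      show ?thesis unfolding c lookup_Var_mult lookup_pderiv using True
        by (simp only: a b if_True)
    next
      case False
      then show ?thesis unfolding lookup_Var_mult using \<open>v = w\<close> by simp
    qed
    show ?thesis using True l r by (simp add: lookup_add algebra_simps)
  next
    case False
    have e: "lk (n + sg v 1) w = lk n w" using False by (simp add: lookup_add lookup_single)
    have l: "lk (pderiv_var v (Var w * p)) n = (if lk n w > 0 then of_nat (lk n v + 1) * lk p (n + sg v 1 - sg w 1) else 0)"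
      unfolding lookup_pderiv lookup_Var_mult e by simp
    have r: "lk (Var w * pderiv_var v p) n = (if lk n w > 0 then of_nat (lk n v + 1) * lk p (n + sg v 1 - sg w 1) else 0)"
    proof (cases "lk n w > 0")
      case True
      have "lk (n - sg w 1) v = lk n v" using False by (simp add: lookup_minus lookup_single)
      moreover have "n - sg w 1 + sg v 1 = n + sg v 1 - sg w 1" using minus_add_comm[OF True] .
      ultimately show ?thesis unfolding lookup_Var_mult lookup_pderiv using True
        by (simp only: if_True)
    next
      case False
      then show ?thesis unfolding lookup_Var_mult by simp
    qed
    show ?thesis using False l r by (simp add: lookup_add)
  qed
qed

definition free :: "var \<Rightarrow> mpoly \<Rightarrow> bool" where
  "free v p \<longleftrightarrow> (\<forall>m\<in>ks p. lk m v = 0)"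

lemma pderiv_free: "free v p \<Longrightarrow> pderiv_var v p = 0"
proof (rule poly_mapping_eqI)
  fix n assume "free v p"
  then have "lk p (n + sg v 1) = 0"
  proof -
    have "n + sg v 1 \<notin> ks p"
    proof
      assume "n + sg v 1 \<in> ks p"
      then have "lk (n + sg v 1) v = 0" using \<open>free v p\<close> unfolding free_def by blast
      then show False by (simp add: lookup_add)
    qed
    then show ?thesis by (simp add: in_keys_iff)
  qed
  then show "lk (pderiv_var v p) n = lk 0 n" by (simp add: lookup_pderiv)
qed

lemma free_add: "free v p \<Longrightarrow> free v q \<Longrightarrow> free v (p + q)"
  unfolding free_def using keys_add[of p q] by auto
lemma free_uminus: "free v p \<Longrightarrow> free v (- p)"
  unfolding free_def by simp
lemma free_diff: "free v p \<Longrightarrow> free v q \<Longrightarrow> free v (p - q)"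
  using free_add[of v p "-q"] free_uminus[of v q] by simp
lemma free_mult: "free v p \<Longrightarrow> free v q \<Longrightarrow> free v (p * q)"
  unfolding free_def
proof
  fix m assume "\<forall>m\<in>ks p. lk m v = 0" "\<forall>m\<in>ks q. lk m v = 0" "m \<in> ks (p * q)"
  then show "lk m v = 0" using keys_mult[of p q] by (auto simp: lookup_add)
qed
lemma free_one: "free v 1"
  unfolding free_def by simp
lemma free_power: "free v p \<Longrightarrow> free v (p ^ k)"
  by (induct k) (simp_all add: free_one free_mult)
lemma free_Var: "v \<noteq> w \<Longrightarrow> free v (Var w)"
  unfolding free_def Var_eq by (simp add: lookup_single)
lemma free_sum: "(\<And>i. i \<in> I \<Longrightarrow> free v (f i)) \<Longrightarrow> free v (sum f I)"
  unfolding free_def using keys_sum[of f I] by auto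


lemma poly_sum_singles: "(p::mpoly) = (\<Sum>m\<in>ks p. sg m (lk p m))"
proof (rule poly_mapping_eqI)
  fix n
  have "lk (\<Sum>m\<in>ks p. sg m (lk p m)) n = (\<Sum>m\<in>ks p. (lk p m when m = n))"
    by (simp add: lookup_sum lookup_single)
  also have "\<dots> = lk p n"
    by (cases "n \<in> ks p") (simp_all add: when_def in_keys_iff)
  finally show "lk p n = lk (\<Sum>m\<in>ks p. sg m (lk p m)) n" by simp
qed

lemma Var_power: "Var v ^ k = sg (sg v k) 1"
proof (induct k)
  case 0 then show ?case by simp
next
  case (Suc k)
  have "Var v ^ Suc k = Var v * sg (sg v k) 1" using Suc by simp
  also have "\<dots> = sg (sg v 1) 1 * sg (sg v k) 1" by (simp only: Var_eq)
  also have "\<dots> = sg (sg v (Suc k)) 1" by (simp add: mult_single single_add[symmetric])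
  finally show ?case .
qed

lemma free_single: "lk m v = 0 \<Longrightarrow> free v (sg m c)"
  unfolding free_def by simp

lemma pow_split: "\<exists>S. (y::mpoly) ^ k = (y - x) * S + x ^ k"
proof -
  have "y ^ k - x ^ k = (y - x) * (\<Sum>i<k. x^(k - Suc i) * y^i)" by (rule power_diff_sumr2)
  then have "y ^ k = (y - x) * (\<Sum>i<k. x^(k - Suc i) * y^i) + x ^ k" by (simp add: diff_eq_eq)
  then show ?thesis by blast
qed

lemma decomp_mono: "\<exists>Q R. sg m c = t2 * Q + R \<and> free Y2 R"
proof -
  define k where "k = lk m Y2"
  define m0 where "m0 = m - sg Y2 k"
  have m: "m = m0 + sg Y2 k"
    unfolding m0_def k_def by (simp add: poly_mapping_eq_iff fun_eq_iff lookup_add lookup_minus lookup_single when_def)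
  have m0: "lk m0 Y2 = 0" unfolding m0_def k_def by (simp add: lookup_minus)
  have e1: "sg m c = sg m0 c * Var Y2 ^ k"
    unfolding Var_power m by (simp add: mult_single)
  obtain S where S: "Var Y2 ^ k = t2 * S + Var X2 ^ k"
    using pow_split[of "Var Y2" k "Var X2"] unfolding t2_def by blast
  have "sg m c = t2 * (sg m0 c * S) + sg m0 c * Var X2 ^ k"
    unfolding e1 S by (simp only: distrib_left mult.left_commute)
  moreover have "free Y2 (sg m0 c * Var X2 ^ k)"
    by (intro free_mult free_single m0 free_power free_Var) simp
  ultimately show ?thesis by blast
qed

lemma decomp: "\<exists>Q R. (p::mpoly) = t2 * Q + R \<and> free Y2 R"
proof -
  have "\<exists>Q R. (\<Sum>m\<in>A. sg m (lk p m)) = t2 * Q + R \<and> free Y2 R" if "finite A" for A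
    using that
  proof (induct A rule: finite_induct)
    case empty
    then show ?case by (rule exI[of _ 0], rule exI[of _ 0]) (simp add: free_def)
  next
    case (insert x F)
    then obtain Q R where QR: "(\<Sum>m\<in>F. sg m (lk p m)) = t2 * Q + R" "free Y2 R" by blast
    obtain Q' R' where QR': "sg x (lk p x) = t2 * Q' + R'" "free Y2 R'" using decomp_mono by blast
    have "(\<Sum>m\<in>insert x F. sg m (lk p m)) = sg x (lk p x) + (\<Sum>m\<in>F. sg m (lk p m))"
      using insert by simp
    also have "\<dots> = t2 * (Q' + Q) + (R' + R)"
      unfolding QR(1) QR'(1) by (simp only: distrib_left add_ac)
    finally have "(\<Sum>m\<in>insert x F. sg m (lk p m)) = t2 * (Q' + Q) + (R' + R)" .
    moreover have "free Y2 (R' + R)" using QR QR' free_add by blast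
    ultimately show ?case by blast
  qed
  from this[of "ks p"] show ?thesis using poly_sum_singles[of p] by simp
qed

lemma lk_t_mult: "lk ((Var a - Var b) * D) n = lk (Var a * D) n - lk (Var b * D) n"
  by (simp add: left_diff_distrib lookup_minus)

lemma t2_top:
  assumes m0: "m0 \<in> ks D" "P m0"
    and cl: "\<And>m. P m \<Longrightarrow> lk m X2 > 0 \<Longrightarrow> P (m + sg Y2 1 - sg X2 1)"
  shows "\<exists>m\<in>ks D. P m \<and> lk (t2 * D) (m + sg Y2 1) = lk D m"
proof -
  define S where "S = {m\<in>ks D. P m}"
  have fin: "finite S" unfolding S_def by simp
  have ne: "(\<lambda>m. lk m Y2) ` S \<noteq> {}" using m0 unfolding S_def by blast
  define M where "M = Max ((\<lambda>m. lk m Y2) ` S)"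
  obtain m where m: "m \<in> S" "lk m Y2 = M" using Max_in[OF finite_imageI[OF fin] ne] unfolding M_def by force
  have mx: "\<And>m'. m' \<in> S \<Longrightarrow> lk m' Y2 \<le> M" unfolding M_def using fin by simp
  have a: "lk (Var Y2 * D) (m + sg Y2 1) = lk D m"
    by (simp add: lookup_Var_mult lookup_add)
  have b: "lk (Var X2 * D) (m + sg Y2 1) = 0"
  proof (cases "lk m X2 > 0")
    case True
    have e: "lk (m + sg Y2 1) X2 = lk m X2" by (simp add: lookup_add lookup_single)
    have P: "P (m + sg Y2 1 - sg X2 1)" using cl[OF _ True] m(1) unfolding S_def by blast
    have "lk (m + sg Y2 1 - sg X2 1) Y2 = M + 1" using m(2) by (simp add: lookup_add lookup_minus lookup_single)
    then have "m + sg Y2 1 - sg X2 1 \<notin> ks D" using mx P unfolding S_def by fastforce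
    then show ?thesis using True unfolding lookup_Var_mult e by (simp add: in_keys_iff)
  next
    case False
    then show ?thesis by (simp add: lookup_Var_mult lookup_add lookup_single)
  qed
  show ?thesis using m(1) a b unfolding S_def t2_def lk_t_mult by auto
qed

lemma t2_free_zero: assumes "free Y2 (t2 * D)" shows "D = 0"
proof (rule ccontr)
  assume "D \<noteq> 0"
  then obtain m0 where "m0 \<in> ks D" by (metis all_not_in_conv keys_eq_empty)
  then obtain m where m: "m \<in> ks D" "lk (t2 * D) (m + sg Y2 1) = lk D m"
    using t2_top[of m0 D "\<lambda>_. True"] by auto
  then have "m + sg Y2 1 \<in> ks (t2 * D)" by (simp add: in_keys_iff)
  then have "lk (m + sg Y2 1) Y2 = 0" using assms unfolding free_def by blast
  then show False by (simp add: lookup_add)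
qed



lemma lk_Var_pderiv_same: "lk (Var a * pderiv_var a z) n = of_nat (lk n a) * lk z n"
proof (cases "lk n a > 0")
  case True
  have a: "lk (n - sg a 1) a + 1 = lk n a" using True by (simp add: lookup_minus lookup_single)
  have b: "n - sg a 1 + sg a 1 = n" using True by (rule minus_add_single)
  show ?thesis unfolding lookup_Var_mult lookup_pderiv using True by (simp only: a b if_True)
next
  case False
  then show ?thesis unfolding lookup_Var_mult by simp
qed

lemma lk_Var_pderiv_other: "b \<noteq> a \<Longrightarrow> lk (Var b * pderiv_var a z) n =
   (if lk n b > 0 then of_nat (lk n a + 1) * lk z (n - sg b 1 + sg a 1) else 0)"
proof (cases "lk n b > 0")
  case True
  assume ba: "b \<noteq> a"
  have a: "lk (n - sg b 1) a = lk n a" using ba by (simp add: lookup_minus lookup_single)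
  show ?thesis unfolding lookup_Var_mult lookup_pderiv using True by (simp only: a if_True)
next
  case False
  then show ?thesis unfolding lookup_Var_mult by simp
qed

definition ydeg :: "mono \<Rightarrow> nat" where "ydeg m = lk m Y1 + lk m Y2"

lemma ydeg_shift: "b \<in> {X1, X2} \<Longrightarrow> a \<in> {Y1, Y2} \<Longrightarrow> lk n b > 0 \<Longrightarrow> ydeg (n - sg b 1 + sg a 1) = ydeg n + 1"
  unfolding ydeg_def by (auto simp: lookup_add lookup_minus lookup_single when_def)

lemma lk_two: "lk (2 * (z::mpoly)) n = 2 * lk z n"
proof -
  have "2 * z = z + z" by (rule mult_2)
  then show ?thesis by (simp only: lookup_add mult_2)
qed

lemma L_zero:
  assumes "2 * z + pderiv_var Y1 z * (Var Y1 - Var X1) + pderiv_var Y2 z * (Var Y2 - Var X2) = 0"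
  shows "z = 0"
proof (rule ccontr)
  assume "z \<noteq> 0"
  then have ne: "ks z \<noteq> {}" by simp
  define M where "M = Max (ydeg ` ks z)"
  obtain m where m: "m \<in> ks z" "ydeg m = M"
  proof -
    have "M \<in> ydeg ` ks z" unfolding M_def by (rule Max_in) (simp_all add: \<open>z \<noteq> 0\<close>)
    then show ?thesis using that by blast
  qed
  have mx: "\<And>m'. m' \<in> ks z \<Longrightarrow> ydeg m' \<le> M" unfolding M_def by simp
  have z0: "lk z (m - sg b 1 + sg a 1) = 0" if "b \<in> {X1, X2}" "a \<in> {Y1, Y2}" "lk m b > 0" for a b
  proof -
    have "ydeg (m - sg b 1 + sg a 1) = M + 1" using ydeg_shift[OF that] m(2) by simp
    then have "m - sg b 1 + sg a 1 \<notin> ks z" using mx[of "m - sg b 1 + sg a 1"] by auto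
    then show ?thesis by (simp add: in_keys_iff)
  qed
  have o1: "lk (Var X1 * pderiv_var Y1 z) m = 0"
    using z0[of X1 Y1] by (simp add: lk_Var_pderiv_other)
  have o2: "lk (Var X2 * pderiv_var Y2 z) m = 0"
    using z0[of X2 Y2] by (simp add: lk_Var_pderiv_other)
  have "lk (2 * z + pderiv_var Y1 z * (Var Y1 - Var X1) + pderiv_var Y2 z * (Var Y2 - Var X2)) m
      = 2 * lk z m + (lk (Var Y1 * pderiv_var Y1 z) m - lk (Var X1 * pderiv_var Y1 z) m)
         + (lk (Var Y2 * pderiv_var Y2 z) m - lk (Var X2 * pderiv_var Y2 z) m)"
    by (simp only: lookup_add lk_two mult.commute[of "pderiv_var Y1 z" "Var Y1 - Var X1"] mult.commute[of "pderiv_var Y2 z" "Var Y2 - Var X2"] lk_t_mult)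
  also have "\<dots> = (2 + of_nat (lk m Y1) + of_nat (lk m Y2)) * lk z m"
    by (simp only: o1 o2 lk_Var_pderiv_same) (simp add: algebra_simps)
  finally have "(2 + of_nat (lk m Y1) + of_nat (lk m Y2)) * lk z m = 0" using assms by simp
  moreover have "(2 + of_nat (lk m Y1) + of_nat (lk m Y2) :: rat) \<noteq> 0"
  proof -
    have "(0::rat) \<le> of_nat (lk m Y1)" "(0::rat) \<le> of_nat (lk m Y2)" by simp_all
    then show ?thesis by linarith
  qed
  ultimately have "lk z m = 0" by simp
  then show False using m(1) by (simp add: in_keys_iff)
qed




lemma mon_deg_eq: "mon_deg m = lk m X1 + lk m X2 + lk m Y1 + lk m Y2"
proof -
  have sub: "ks m \<subseteq> {X1, X2, Y1, Y2}" by (auto intro: var.exhaust)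
  have "mon_deg m = (\<Sum>v\<in>{X1, X2, Y1, Y2}. lk m v)"
    unfolding mon_deg_def by (rule sum.mono_neutral_left) (use sub in \<open>auto simp: in_keys_iff\<close>)
  then show ?thesis by simp
qed

lemma mon_deg_add: "mon_deg (a + b) = mon_deg a + mon_deg b"
  by (simp add: mon_deg_eq lookup_add)

lemma mon_deg_single: "mon_deg (sg v k) = k"
  by (cases v) (simp_all add: mon_deg_eq lookup_single)

definition hd :: "nat \<Rightarrow> mpoly \<Rightarrow> bool" where
  "hd k p \<longleftrightarrow> (\<forall>m\<in>ks p. mon_deg m = k)"

lemma hd_zero: "hd k 0" unfolding hd_def by simp
lemma hd_add: "hd k p \<Longrightarrow> hd k q \<Longrightarrow> hd k (p + q)"
  unfolding hd_def using keys_add[of p q] by auto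
lemma hd_uminus: "hd k p \<Longrightarrow> hd k (- p)"
  unfolding hd_def by simp
lemma hd_diff: "hd k p \<Longrightarrow> hd k q \<Longrightarrow> hd k (p - q)"
  using hd_add[of k p "-q"] hd_uminus[of k q] by simp
lemma hd_mult: "hd k p \<Longrightarrow> hd l q \<Longrightarrow> hd (k + l) (p * q)"
  unfolding hd_def
proof
  fix m assume "\<forall>m\<in>ks p. mon_deg m = k" "\<forall>m\<in>ks q. mon_deg m = l" "m \<in> ks (p * q)"
  then show "mon_deg m = k + l" using keys_mult[of p q] by (auto simp: mon_deg_add)
qed
lemma hd_one: "hd 0 1" unfolding hd_def by (simp add: mon_deg_eq)
lemma hd_Const: "hd 0 (Const c)" unfolding hd_def Const_def by (simp add: mon_deg_eq)
lemma hd_Var: "hd 1 (Var v)" unfolding hd_def Var_eq by (simp add: mon_deg_single)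
lemma hd_power: "hd k p \<Longrightarrow> hd (k * n) (p ^ n)"
proof (induct n)
  case 0 then show ?case by (simp add: hd_one)
next
  case (Suc n)
  then have "hd (k + k * n) (p * p ^ n)" by (intro hd_mult) simp_all
  then show ?case by (simp add: algebra_simps)
qed
lemma hd_sum: "(\<And>i. i \<in> I \<Longrightarrow> hd k (f i)) \<Longrightarrow> hd k (sum f I)"
  unfolding hd_def using keys_sum[of f I] by blast

lemma hd_sum_ne: "hd k p \<Longrightarrow> hd l q \<Longrightarrow> k \<noteq> l \<Longrightarrow> m \<in> ks p \<Longrightarrow> lk (p + q) m = lk p m"
proof -
  assume "hd k p" "hd l q" "k \<noteq> l" "m \<in> ks p"
  then have "m \<notin> ks q" unfolding hd_def by auto
  then show ?thesis by (simp add: lookup_add in_keys_iff)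
qed




lemma Const_mult: "Const a * Const b = Const (a * b)"
  unfolding Const_def by (simp add: mult_single)
lemma Const_add: "Const a + Const b = Const (a + b)"
  unfolding Const_def by (simp add: single_add)
lemma Const_one: "Const 1 = 1" unfolding Const_def by simp
lemma Const_two: "Const 2 = 2" unfolding Const_def by simp
lemma half: "Const (1/2) * 2 = 1"
  by (simp only: Const_two[symmetric] Const_mult) (simp add: Const_one)

lemma hd_t1: "hd 1 t1" unfolding t1_def by (intro hd_diff hd_Var)
lemma hd_t2: "hd 1 t2" unfolding t2_def by (intro hd_diff hd_Var)
lemma hd_s1: "hd 1 s1" unfolding s1_def by (intro hd_diff hd_add hd_Var)
lemma hd_VV: "hd 2 (Var a * Var b)"
  using hd_mult[OF hd_Var[of a] hd_Var[of b]] by (simp only: one_add_one)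
lemma hd_s2: "hd 2 s2" unfolding s2_def by (intro hd_diff hd_VV)
lemma hd_wpoly: "hd N (wpoly N x y)"
  unfolding wpoly_def
proof (rule hd_sum)
  fix k assume "k \<in> {..N}"
  then have "hd (1 * k + 1 * (N - k)) (Var y ^ k * Var x ^ (N - k))"
    by (intro hd_mult hd_power hd_Var)
  then show "hd N (Var y ^ k * Var x ^ (N - k))" using \<open>k \<in> {..N}\<close> by simp
qed
lemma hd_Wpot: "hd (N+1) (Wpot N)"
proof -
  have h: "hd (N+1) (Var v ^ (N+1))" for v using hd_power[OF hd_Var, of "N+1"] by simp
  show ?thesis unfolding Wpot_def by (intro hd_diff hd_add h)
qed
lemma hd_p: "hd 1 (Const c * (Var a + Var b))"
  using hd_mult[OF hd_Const hd_add[OF hd_Var hd_Var]] by simp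

lemma single_eq_iff: "(sg v k = sg w j) \<longleftrightarrow> (k = 0 \<and> j = 0) \<or> (v = w \<and> k = (j::nat))"
proof
  assume e: "sg v k = sg w j"
  have a: "lk (sg v k) v = lk (sg w j) v" using e by simp
  have b: "lk (sg v k) w = lk (sg w j) w" using e by simp
  show "(k = 0 \<and> j = 0) \<or> (v = w \<and> k = j)"
    using a b by (cases "v = w") (auto simp: lookup_single)
qed auto

lemma lk_Wpot: "lk (Wpot N) (sg Y1 (N+1)) = 1"
  unfolding Wpot_def Var_power by (simp add: lookup_minus lookup_add lookup_single when_def single_eq_iff)

lemma lk_Var: "lk (Var v) (sg w k) = (if v = w \<and> k = 1 then 1 else 0)"
  unfolding Var_eq by (auto simp add: lookup_single when_def single_eq_iff)

lemma t1_nz: "t1 \<noteq> 0"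
proof
  assume "t1 = 0"
  then have "lk t1 (sg Y1 1) = 0" by simp
  then show False unfolding t1_def by (simp add: lookup_minus lk_Var)
qed
lemma t2_nz: "t2 \<noteq> 0"
proof
  assume "t2 = 0"
  then have "lk t2 (sg Y2 1) = 0" by simp
  then show False unfolding t2_def by (simp add: lookup_minus lk_Var)
qed
lemma s1_nz: "s1 \<noteq> 0"
proof
  assume "s1 = 0"
  then have "lk s1 (sg Y1 1) = 0" by simp
  then show False unfolding s1_def by (simp add: lookup_minus lookup_add lk_Var)
qed
lemma s2_nz: "s2 \<noteq> 0"
proof
  assume "s2 = 0"
  then have "lk s2 (sg Y1 1 + sg Y2 1) = 0" by simp
  moreover have "sg X1 1 + sg X2 1 \<noteq> sg Y1 1 + (sg Y2 1 :: mono)"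
  proof
    assume "sg X1 1 + sg X2 1 = sg Y1 1 + (sg Y2 1 :: mono)"
    then have "lk (sg X1 1 + sg X2 1 :: mono) Y1 = lk (sg Y1 1 + sg Y2 1 :: mono) Y1" by simp
    then show False by (simp add: lookup_add lookup_single)
  qed
  ultimately show False unfolding s2_def Var_eq
    by (simp add: lookup_minus mult_single lookup_single when_def)
qed




lemma hd_u:
  assumes N: "N > 0" and h1: "homogeneous u1" and h2: "homogeneous u2"
    and W: "Wpot N = u1 * s1 + u2 * s2"
  shows "hd N u1 \<and> hd (N - 1) u2"
proof -
  obtain d1 where d1: "hd d1 u1" using h1 unfolding homogeneous_def hd_def by blast
  obtain d2 where d2: "hd d2 u2" using h2 unfolding homogeneous_def hd_def by blast
  have A: "hd (d1 + 1) (u1 * s1)" using hd_mult[OF d1 hd_s1] .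
  have B: "hd (d2 + 2) (u2 * s2)" using hd_mult[OF d2 hd_s2] .
  have mW: "sg Y1 (N+1) \<in> ks (Wpot N)" using lk_Wpot[of N] by (simp add: in_keys_iff)
  have degW: "mon_deg (sg Y1 (N+1)) = N + 1" by (simp add: mon_deg_single)
  have mW': "sg Y1 (N+1) \<in> ks (u1 * s1) \<or> sg Y1 (N+1) \<in> ks (u2 * s2)"
    using mW keys_add[of "u1 * s1" "u2 * s2"] W by auto
  have g1: "hd N u1"
  proof (cases "u1 = 0")
    case True then show ?thesis by (simp add: hd_zero)
  next
    case False
    then have "u1 * s1 \<noteq> 0" using s1_nz by simp
    then obtain m where m: "m \<in> ks (u1 * s1)" by (metis all_not_in_conv keys_eq_empty)
    have "d1 = N"
    proof (cases "d1 + 1 = d2 + 2")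
      case True
      then show ?thesis using mW' A B degW unfolding hd_def by auto
    next
      case False
      have "lk (Wpot N) m = lk (u1 * s1) m" unfolding W using hd_sum_ne[OF A B False m] .
      then have "m \<in> ks (Wpot N)" using m by (simp add: in_keys_iff)
      then have "mon_deg m = N + 1" using hd_Wpot[of N] unfolding hd_def by blast
      moreover have "mon_deg m = d1 + 1" using A m unfolding hd_def by blast
      ultimately show ?thesis by simp
    qed
    then show ?thesis using d1 by simp
  qed
  have g2: "hd (N - 1) u2"
  proof (cases "u2 = 0")
    case True then show ?thesis by (simp add: hd_zero)
  next
    case False
    then have "u2 * s2 \<noteq> 0" using s2_nz by simp
    then obtain m where m: "m \<in> ks (u2 * s2)" by (metis all_not_in_conv keys_eq_empty)
    have "d2 + 2 = N + 1"
    proof (cases "d1 + 1 = d2 + 2")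
      case True
      then show ?thesis using mW' A B degW unfolding hd_def by auto
    next
      case False
      then have F: "d2 + 2 \<noteq> d1 + 1" by simp
      have "lk (Wpot N) m = lk (u2 * s2) m" unfolding W using hd_sum_ne[OF B A F m] by (simp add: add.commute)
      then have "m \<in> ks (Wpot N)" using m by (simp add: in_keys_iff)
      then have "mon_deg m = N + 1" using hd_Wpot[of N] unfolding hd_def by blast
      moreover have "mon_deg m = d2 + 2" using B m unfolding hd_def by blast
      ultimately show ?thesis by simp
    qed
    then have "d2 = N - 1" by simp
    then show ?thesis using d2 by simp
  qed
  show ?thesis using g1 g2 by simp
qed

definition hh :: mpoly where "hh = Const (1/2)"
definition p1 :: mpoly where "p1 = hh * (Var X1 + Var Y1)"
definition p2 :: mpoly where "p2 = hh * (Var X2 + Var Y2)"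
definition Aa :: "nat \<Rightarrow> mpoly \<Rightarrow> mpoly \<Rightarrow> mpoly" where "Aa N u1 u2 = w1 N - u1 - u2 * p2"
definition Bb :: "nat \<Rightarrow> mpoly \<Rightarrow> mpoly \<Rightarrow> mpoly" where "Bb N u1 u2 = u1 + u2 * p1 - w2 N"

lemma hh2: "hh * 2 = 1" unfolding hh_def by (rule half)

lemma t_w: "(Var y - Var x) * wpoly N x y = Var y ^ (N + 1) - Var x ^ (N + 1)"
proof -
  have "Var y ^ (N+1) - Var x ^ (N+1) = (Var y - Var x) * (\<Sum>i<N+1. Var x ^ (N + 1 - Suc i) * Var y ^ i)"
    by (rule power_diff_sumr2)
  also have "(\<Sum>i<N+1. Var x ^ (N + 1 - Suc i) * Var y ^ i) = wpoly N x y"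
    unfolding wpoly_def by (simp add: lessThan_Suc_atMost mult.commute)
  finally show ?thesis by simp
qed

lemma s2_eq: "s2 = t1 * p2 + t2 * p1"
proof -
  have "t1 * p2 + t2 * p1 = hh * 2 * (Var Y1 * Var Y2 - Var X1 * Var X2)"
    unfolding t1_def t2_def p1_def p2_def by (simp add: algebra_simps)
  then show ?thesis unfolding hh2 s2_def by simp
qed

lemma s1_eq: "s1 = t1 + t2" unfolding s1_def t1_def t2_def by (simp add: algebra_simps)

lemma tAB: assumes W: "Wpot N = u1 * s1 + u2 * s2"
  shows "t1 * Aa N u1 u2 = t2 * Bb N u1 u2"
proof -
  have "t1 * Aa N u1 u2 - t2 * Bb N u1 u2 = (t1 * w1 N + t2 * w2 N) - u1 * (t1 + t2) - u2 * (t1 * p2 + t2 * p1)"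
    unfolding Aa_def Bb_def by (simp add: algebra_simps)
  also have "t1 * w1 N + t2 * w2 N = Wpot N"
    unfolding w1_def w2_def t1_def t2_def t_w Wpot_def by (simp add: algebra_simps)
  also have "t1 + t2 = s1" by (simp add: s1_eq)
  also have "t1 * p2 + t2 * p1 = s2" by (simp add: s2_eq)
  finally show ?thesis using W by (simp add: algebra_simps)
qed




lemma free_t1: "free Y2 t1" unfolding t1_def by (intro free_diff free_Var) simp_all

lemma Om_exists:
  assumes W: "Wpot N = u1 * s1 + u2 * s2"
  shows "\<exists>Om. t2 * Om = Aa N u1 u2 \<and> t1 * Om = Bb N u1 u2"
proof -
  obtain Q R where QR: "Aa N u1 u2 = t2 * Q + R" "free Y2 R" using decomp by blast
  have e: "t1 * Aa N u1 u2 = t2 * Bb N u1 u2" using tAB[OF W] .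
  have "t2 * (Bb N u1 u2 - t1 * Q) = t1 * R"
    using e unfolding QR(1) by (simp add: algebra_simps)
  moreover have "free Y2 (t1 * R)" using free_mult[OF free_t1 QR(2)] .
  ultimately have z: "Bb N u1 u2 - t1 * Q = 0" using t2_free_zero by metis
  then have "t1 * R = 0" using \<open>t2 * _ = t1 * R\<close> by simp
  then have "R = 0" using t1_nz by simp
  then show ?thesis using QR(1) z by (intro exI[of _ Q]) simp
qed

lemma hd_from_t2:
  assumes N: "N > 0" and A: "hd N A" and e: "t2 * Om = A"
  shows "hd (N - 1) Om"
proof (rule ccontr)
  assume "\<not> hd (N - 1) Om"
  then obtain m0 where m0: "m0 \<in> ks Om" "mon_deg m0 \<noteq> N - 1" unfolding hd_def by blast
  have cl: "mon_deg (m + sg Y2 1 - sg X2 1) \<noteq> N - 1" if "mon_deg m \<noteq> N - 1" "lk m X2 > 0" for m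
  proof -
    have "mon_deg (m + sg Y2 1 - sg X2 1) = mon_deg m"
      using that(2) by (simp add: mon_deg_eq lookup_add lookup_minus lookup_single)
    then show ?thesis using that(1) by simp
  qed
  obtain m where m: "m \<in> ks Om" "mon_deg m \<noteq> N - 1" "lk (t2 * Om) (m + sg Y2 1) = lk Om m"
    using t2_top[of m0 Om "\<lambda>m. mon_deg m \<noteq> N - 1", OF m0 cl] by blast
  then have "m + sg Y2 1 \<in> ks A" using e by (simp add: in_keys_iff)
  then have "mon_deg (m + sg Y2 1) = N" using A unfolding hd_def by blast
  then have "mon_deg m + 1 = N" by (simp add: mon_deg_add mon_deg_single)
  then show False using m(2) by simp
qed

lemma hd_A: assumes "hd N u1" "hd (N - 1) u2" "N > 0" shows "hd N (Aa N u1 u2)"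
proof -
  have "hd (N - 1 + 1) (u2 * p2)" unfolding p2_def hh_def using hd_mult[OF assms(2) hd_p] .
  then have "hd N (u2 * p2)" using assms(3) by simp
  then show ?thesis unfolding Aa_def w1_def using assms(1) by (intro hd_diff hd_wpoly)
qed

lemma pd_t: "pderiv_var a ((Var a - Var b) * Om) = Om + (Var a - Var b) * pderiv_var a Om" if "a \<noteq> b"
proof -
  have "pderiv_var a ((Var a - Var b) * Om) = pderiv_var a (Var a * Om) - pderiv_var a (Var b * Om)"
    by (simp only: left_diff_distrib pderiv_diff)
  also have "\<dots> = Om + Var a * pderiv_var a Om - Var b * pderiv_var a Om"
    using that by (simp only: pderiv_Var_mult if_True if_False) simp
  finally show ?thesis by (simp add: algebra_simps)
qed

lemma pd_up: "pderiv_var a (u * (hh * (Var b + Var a))) = hh * (Var b * pderiv_var a u) + hh * (u + Var a * pderiv_var a u)" if "a \<noteq> b"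
proof -
  have "u * (hh * (Var b + Var a)) = hh * (Var b * u) + hh * (Var a * u)" by (simp add: algebra_simps)
  then show ?thesis using that unfolding hh_def by (simp add: pderiv_add pderiv_Const_mult pderiv_Var_mult)
qed

lemma free_wpoly: "v \<noteq> x \<Longrightarrow> v \<noteq> y \<Longrightarrow> free v (wpoly N x y)"
  unfolding wpoly_def by (intro free_sum free_mult free_power free_Var) auto

lemma Om_pde:
  assumes e2: "t2 * Om = Aa N u1 u2" and e1: "t1 * Om = Bb N u1 u2"
  shows "pde_sol (gamma u1 u2) Om"
proof -
  have E2: "Om + t2 * pderiv_var Y2 Om = - pderiv_var Y2 u1 - (hh * (Var X2 * pderiv_var Y2 u2) + hh * (u2 + Var Y2 * pderiv_var Y2 u2))"
  proof -
    have "pderiv_var Y2 (t2 * Om) = pderiv_var Y2 (Aa N u1 u2)" using e2 by simp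
    moreover have "pderiv_var Y2 (t2 * Om) = Om + t2 * pderiv_var Y2 Om" unfolding t2_def by (rule pd_t) simp
    moreover have "pderiv_var Y2 (Aa N u1 u2) = - pderiv_var Y2 u1 - (hh * (Var X2 * pderiv_var Y2 u2) + hh * (u2 + Var Y2 * pderiv_var Y2 u2))"
      unfolding Aa_def p2_def w1_def
      by (simp add: pderiv_diff pd_up pderiv_free free_wpoly)
    ultimately show ?thesis by simp
  qed
  have E1: "Om + t1 * pderiv_var Y1 Om = pderiv_var Y1 u1 + (hh * (Var X1 * pderiv_var Y1 u2) + hh * (u2 + Var Y1 * pderiv_var Y1 u2))"
  proof -
    have "pderiv_var Y1 (t1 * Om) = pderiv_var Y1 (Bb N u1 u2)" using e1 by simp
    moreover have "pderiv_var Y1 (t1 * Om) = Om + t1 * pderiv_var Y1 Om" unfolding t1_def by (rule pd_t) simp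
    moreover have "pderiv_var Y1 (Bb N u1 u2) = pderiv_var Y1 u1 + (hh * (Var X1 * pderiv_var Y1 u2) + hh * (u2 + Var Y1 * pderiv_var Y1 u2))"
      unfolding Bb_def p1_def w2_def
      by (simp add: pderiv_diff pderiv_add pd_up pderiv_free free_wpoly)
    ultimately show ?thesis by simp
  qed
  have "2 * Om + pderiv_var Y1 Om * (Var Y1 - Var X1) + pderiv_var Y2 Om * (Var Y2 - Var X2)
        = (Om + t1 * pderiv_var Y1 Om) + (Om + t2 * pderiv_var Y2 Om)"
    unfolding t1_def t2_def by (simp add: algebra_simps mult_2)
  also have "\<dots> = gamma u1 u2"
    unfolding E1 E2 gamma_def hh_def[symmetric] by (simp add: algebra_simps)
  finally show ?thesis unfolding pde_sol_def .
qed




lemma hom_hd: "hd k p \<Longrightarrow> hom_of_deg (2 * int k) p"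
  unfolding hd_def hom_of_deg_def by simp
lemma hom_mult: "hom_of_deg a p \<Longrightarrow> hom_of_deg b q \<Longrightarrow> a + b = c \<Longrightarrow> hom_of_deg c (p * q)"
  unfolding hom_of_deg_def
proof
  fix m assume "\<forall>m\<in>ks p. 2 * int (mon_deg m) = a" "\<forall>m\<in>ks q. 2 * int (mon_deg m) = b" "a + b = c" "m \<in> ks (p * q)"
  then show "2 * int (mon_deg m) = c" using keys_mult[of p q] by (auto simp: mon_deg_add)
qed
lemma hom_add: "hom_of_deg a p \<Longrightarrow> hom_of_deg a q \<Longrightarrow> hom_of_deg a (p + q)"
  unfolding hom_of_deg_def using keys_add[of p q] by auto
lemma hom_zero: "hom_of_deg a 0" unfolding hom_of_deg_def by simp
lemma hom_p: "hom_of_deg 2 (Const c * (Var a + Var b))"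
  using hom_hd[OF hd_p] by simp
lemma hom_q: "hom_of_deg 2 (Const (1/2) * (Var X1 + Var Y1 - Var X2 - Var Y2))"
proof -
  have "hd 1 (Const (1/2) * (Var X1 + Var Y1 - Var X2 - Var Y2))"
  proof -
    have "hd 1 (Var X1 + Var Y1 - Var X2 - Var Y2)" by (intro hd_diff hd_add hd_Var)
    from hd_mult[OF hd_Const this] show ?thesis by simp
  qed
  then show ?thesis using hom_hd by fastforce
qed

lemma deg_part:
  assumes Om: "hd (N - 1) Om" and N: "N > 0"
  shows "ext_hom_deg (theta_deg (int N + 1) (2 * int N) (2 * int N - 2)) d f \<longrightarrow>
         ext_hom_deg (theta_deg (int N + 1) (2 * int N) (2 * int N)) d (chi1 Om f)"
proof
  assume h: "ext_hom_deg (theta_deg (int N + 1) (2 * int N) (2 * int N - 2)) d f"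
  have f0: "hom_of_deg d (f E0)" using h[unfolded ext_hom_deg_def, rule_format, of E0] unfolding theta_deg_def by simp
  have f1: "hom_of_deg (d - (1 - int N)) (f E1)" using h[unfolded ext_hom_deg_def, rule_format, of E1] unfolding theta_deg_def by simp
  have f2: "hom_of_deg (d - (3 - int N)) (f E2)" using h[unfolded ext_hom_deg_def, rule_format, of E2] unfolding theta_deg_def by simp
  have f12: "hom_of_deg (d - (4 - 2 * int N)) (f E12)" using h[unfolded ext_hom_deg_def, rule_format, of E12] unfolding theta_deg_def by simp
  have hO: "hom_of_deg (2 * int N - 2) Om" using hom_hd[OF Om] N by (simp add: of_nat_diff)
  show "ext_hom_deg (theta_deg (int N + 1) (2 * int N) (2 * int N)) d (chi1 Om f)"
    unfolding ext_hom_deg_def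
  proof
    fix e show "hom_of_deg (d - theta_deg (int N + 1) (2 * int N) (2 * int N) e) (chi1 Om f e)"
    proof (cases e)
      case E0 then show ?thesis using f0 by (simp add: chi1_def lin_ext_def chi1_img_def theta_deg_def)
    next
      case E1
      have "hom_of_deg (d - (1 - int N)) (f E1 + f E2 * (Const (1/2) * (Var X2 + Var Y2)))"
        by (intro hom_add f1 hom_mult[OF f2 hom_p]) simp
      then show ?thesis using E1 by (simp add: chi1_def lin_ext_def chi1_img_def theta_deg_def)
    next
      case E2
      have "hom_of_deg (d - (1 - int N)) (f E1 + f E2 * (Const (1/2) * (Var X1 + Var Y1)))"
        by (intro hom_add f1 hom_mult[OF f2 hom_p]) simp
      then show ?thesis using E2 by (simp add: chi1_def lin_ext_def chi1_img_def theta_deg_def)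
    next
      case E12
      have "hom_of_deg (d - (2 - 2 * int N)) (f E0 * Om + f E12 * (Const (1/2) * (Var X1 + Var Y1 - Var X2 - Var Y2)))"
        by (intro hom_add hom_mult[OF f0 hO] hom_mult[OF f12 hom_q]) simp_all
      then show ?thesis using E12 by (simp add: chi1_def lin_ext_def chi1_img_def theta_deg_def)
    qed
  qed
qed

lemma chain_part:
  assumes e2: "t2 * Om = Aa N u1 u2" and e1: "t1 * Om = Bb N u1 u2"
  shows "koszul_d (w1 N) (w2 N) t1 t2 (chi1 Om f) = chi1 Om (koszul_d u1 u2 s1 s2 f)"
proof
  fix e
  define H where "H = hh * 2 - 1"
  define D1 where "D1 = t1 * Om - Bb N u1 u2"
  define D2 where "D2 = t2 * Om - Aa N u1 u2"
  have H0: "H = 0" unfolding H_def using hh2 by simp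
  have D10: "D1 = 0" unfolding D1_def using e1 by simp
  have D20: "D2 = 0" unfolding D2_def using e2 by simp
  note U = Aa_def Bb_def p1_def p2_def t1_def t2_def s1_def s2_def
  show "koszul_d (w1 N) (w2 N) t1 t2 (chi1 Om f) e = chi1 Om (koszul_d u1 u2 s1 s2 f) e"
  proof (cases e)
    case E0
    have key: "t1 * (f E1 + f E2 * (hh * (Var X2 + Var Y2))) + t2 * (f E1 + f E2 * (hh * (Var X1 + Var Y1)))
       = s1 * f E1 + s2 * f E2 + f E2 * s2 * H"
      unfolding H_def U by algebra
    show ?thesis unfolding koszul_d_def ext_add_def ext_smult_def ext_wedge_def contr1_def contr2_def theta1_def theta2_def
        chi1_def lin_ext_def chi1_img_def hh_def[symmetric] using E0 key H0 by simp
  next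
    case E1
    have key: "- t2 * (f E0 * Om + f E12 * (hh * (Var X1 + Var Y1 - Var X2 - Var Y2))) + w1 N * f E0
       = (- s2 * f E12 + u1 * f E0) + (s1 * f E12 + u2 * f E0) * (hh * (Var X2 + Var Y2)) - f E0 * D2 - f E12 * s2 * H"
      unfolding H_def D2_def U by algebra
    show ?thesis unfolding koszul_d_def ext_add_def ext_smult_def ext_wedge_def contr1_def contr2_def theta1_def theta2_def
        chi1_def lin_ext_def chi1_img_def hh_def[symmetric] using E1 key H0 D20 by (simp add: algebra_simps)
  next
    case E2
    have key: "t1 * (f E0 * Om + f E12 * (hh * (Var X1 + Var Y1 - Var X2 - Var Y2))) + w2 N * f E0
       = (- s2 * f E12 + u1 * f E0) + (s1 * f E12 + u2 * f E0) * (hh * (Var X1 + Var Y1)) + f E0 * D1 - f E12 * s2 * H"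
      unfolding H_def D1_def U by algebra
    show ?thesis unfolding koszul_d_def ext_add_def ext_smult_def ext_wedge_def contr1_def contr2_def theta1_def theta2_def
        chi1_def lin_ext_def chi1_img_def hh_def[symmetric] using E2 key H0 D10 by (simp add: algebra_simps)
  next
    case E12
    have key: "w1 N * (f E1 + f E2 * (hh * (Var X1 + Var Y1))) - w2 N * (f E1 + f E2 * (hh * (Var X2 + Var Y2)))
       = (s1 * f E1 + s2 * f E2) * Om + (u1 * f E2 - u2 * f E1) * (hh * (Var X1 + Var Y1 - Var X2 - Var Y2))
         - f E1 * (D1 + D2) - f E2 * (hh * (Var X2 + Var Y2) * D1 + hh * (Var X1 + Var Y1) * D2) + f E2 * s2 * Om * H"
      unfolding H_def D1_def D2_def U by algebra
    show ?thesis unfolding koszul_d_def ext_add_def ext_smult_def ext_wedge_def contr1_def contr2_def theta1_def theta2_def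
        chi1_def lin_ext_def chi1_img_def hh_def[symmetric] using E12 key H0 D10 D20 by (simp add: algebra_simps)
  qed
qed




lemma pde_unique: "pde_sol g z1 \<Longrightarrow> pde_sol g z2 \<Longrightarrow> z1 = z2"
proof -
  assume a: "pde_sol g z1" "pde_sol g z2"
  have "2 * (z1 - z2) + pderiv_var Y1 (z1 - z2) * (Var Y1 - Var X1) + pderiv_var Y2 (z1 - z2) * (Var Y2 - Var X2)
      = (2 * z1 + pderiv_var Y1 z1 * (Var Y1 - Var X1) + pderiv_var Y2 z1 * (Var Y2 - Var X2))
        - (2 * z2 + pderiv_var Y1 z2 * (Var Y1 - Var X1) + pderiv_var Y2 z2 * (Var Y2 - Var X2))"
    by (simp add: pderiv_diff algebra_simps)
  also have "\<dots> = 0" using a unfolding pde_sol_def by simp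
  finally have "z1 - z2 = 0" by (rule L_zero)
  then show ?thesis by simp
qed

theorem lemmaA4:
  fixes N :: nat and u1 u2 :: mpoly
  assumes "N > 0"
    and "homogeneous u1" and "homogeneous u2"
    and "Wpot N = u1 * s1 + u2 * s2"
    and "msubst swap_xy u1 = u1" and "msubst swap_xy u2 = u2"
  shows "(\<exists>!z. pde_sol (gamma u1 u2) z) \<and>
    (let Om = (THE z. pde_sol (gamma u1 u2) z);
         c = int N + 1
     in graded_mf_morphism (chi1 Om)
          (koszul_d u1 u2 s1 s2) (theta_deg c (2 * int N) (2 * int N - 2))
          (koszul_d (w1 N) (w2 N) t1 t2) (theta_deg c (2 * int N) (2 * int N))
        \<and> homotopic_to_module (koszul_d u1 u2 s1 s2) t1 t2
            (\<lambda>f. proj0 (chi1 Om f)) proj0)"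
proof -
  obtain Om where e2: "t2 * Om = Aa N u1 u2" and e1: "t1 * Om = Bb N u1 u2"
    using Om_exists[OF assms(4)] by blast
  have sol: "pde_sol (gamma u1 u2) Om" using Om_pde[OF e2 e1] .
  have ex1: "\<exists>!z. pde_sol (gamma u1 u2) z" using sol pde_unique by blast
  have the: "(THE z. pde_sol (gamma u1 u2) z) = Om" using sol pde_unique by blast
  have hu: "hd N u1 \<and> hd (N - 1) u2" using hd_u[OF assms(1,2,3,4)] .
  have hOm: "hd (N - 1) Om"
    using hd_from_t2[OF assms(1) hd_A[OF conjunct1[OF hu] conjunct2[OF hu] assms(1)] e2] .
  have gm: "graded_mf_morphism (chi1 Om)
          (koszul_d u1 u2 s1 s2) (theta_deg (int N + 1) (2 * int N) (2 * int N - 2))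
          (koszul_d (w1 N) (w2 N) t1 t2) (theta_deg (int N + 1) (2 * int N) (2 * int N))"
    unfolding graded_mf_morphism_def
  proof (intro conjI allI impI)
    fix f show "koszul_d (w1 N) (w2 N) t1 t2 (chi1 Om f) = chi1 Om (koszul_d u1 u2 s1 s2 f)"
      by (rule chain_part[OF e2 e1])
  next
    fix f assume "ext_even f" then show "ext_even (chi1 Om f)"
      unfolding ext_even_def chi1_def lin_ext_def chi1_img_def by simp
  next
    fix f assume "ext_odd f" then show "ext_odd (chi1 Om f)"
      unfolding ext_odd_def chi1_def lin_ext_def chi1_img_def by simp
  next
    fix d f
    show "ext_hom_deg (theta_deg (int N + 1) (2 * int N) (2 * int N - 2)) d f \<Longrightarrow>
         ext_hom_deg (theta_deg (int N + 1) (2 * int N) (2 * int N)) d (chi1 Om f)"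
      using deg_part[OF hOm assms(1)] by blast
  qed
  have ht: "homotopic_to_module (koszul_d u1 u2 s1 s2) t1 t2 (\<lambda>f. proj0 (chi1 Om f)) proj0"
    unfolding homotopic_to_module_def in_ideal2_def
    apply (rule exI[of _ 0], rule exI[of _ 0])
    apply (simp add: proj0_def chi1_def lin_ext_def chi1_img_def)
    apply (rule exI[of _ 0], rule exI[of _ 0])
    apply simp
    done
  show ?thesis unfolding Let_def the using ex1 gm ht by simp
qed


end
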